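(* Let $n$ and $x$ be integers with $4 \leq x \leq n-3$ and such that $(n-4)x$ is even. Let $d$ be the sequence of length $n$ $$d = (n-1,\, n-1,\, \underbrace{x, \ldots, x}_{n-4},\, 2,\, 2).$$ Then $d$ is a $2$-factorable graphic sequence, and no realization of $d$ has a connected $2$-factor.
   Context: A finite sequence of nonnegative integers $d = (d_1, \ldots, d_n)$ is graphic if there is a simple graph on vertices $v_1, \ldots, v_n$ with $\deg(v_i) = d_i$ for all $i$; such a graph is a realization of $d$. A $k$-factor of a graph $G$ is a spanning subgraph of $G$ in which every vertex has degree $k$. A graphic sequence $d$ is $k$-factorable if some realization of $d$ contains a $k$-factor. A connected $k$-factor is a $k$-factor that is a connected graph. *)

theory Defs
  imports Main
begin

definition simple_graph :: "nat \<Rightarrow> (nat \<Rightarrow> nat \<Rightarrow> bool) \<Rightarrow> bool" where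
  "simple_graph n E \<longleftrightarrow>
     (\<forall>u v. E u v \<longrightarrow> u < n \<and> v < n) \<and>
     (\<forall>u v. E u v \<longrightarrow> E v u) \<and>
     (\<forall>v. \<not> E v v)"

definition degree :: "nat \<Rightarrow> (nat \<Rightarrow> nat \<Rightarrow> bool) \<Rightarrow> nat \<Rightarrow> nat" where
  "degree n E v = card {u. u < n \<and> E v u}"

definition realization :: "nat \<Rightarrow> (nat \<Rightarrow> nat) \<Rightarrow> (nat \<Rightarrow> nat \<Rightarrow> bool) \<Rightarrow> bool" where
  "realization n d E \<longleftrightarrow> simple_graph n E \<and> (\<forall>v<n. degree n E v = d v)"

definition graphic :: "nat \<Rightarrow> (nat \<Rightarrow> nat) \<Rightarrow> bool" where
  "graphic n d \<longleftrightarrow> (\<exists>E. realization n d E)"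

definition k_factor :: "nat \<Rightarrow> nat \<Rightarrow> (nat \<Rightarrow> nat \<Rightarrow> bool) \<Rightarrow> (nat \<Rightarrow> nat \<Rightarrow> bool) \<Rightarrow> bool" where
  "k_factor n k E F \<longleftrightarrow> simple_graph n F \<and> (\<forall>u v. F u v \<longrightarrow> E u v) \<and>
     (\<forall>v<n. degree n F v = k)"

definition k_factorable :: "nat \<Rightarrow> nat \<Rightarrow> (nat \<Rightarrow> nat) \<Rightarrow> bool" where
  "k_factorable n k d \<longleftrightarrow> (\<exists>E. realization n d E \<and> (\<exists>F. k_factor n k E F))"

definition connected_graph :: "nat \<Rightarrow> (nat \<Rightarrow> nat \<Rightarrow> bool) \<Rightarrow> bool" where
  "connected_graph n F \<longleftrightarrow> (\<forall>u<n. \<forall>v<n. F\<^sup>*\<^sup>* u v)"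

definition seq_d :: "nat \<Rightarrow> nat \<Rightarrow> nat \<Rightarrow> nat" where
  "seq_d n x i = (if i < 2 then n - 1 else if i < n - 2 then x else 2)"

end

theory Submission
  imports Defs
begin


definition circ :: "nat \<Rightarrow> nat set \<Rightarrow> nat \<Rightarrow> nat \<Rightarrow> bool" where
  "circ m D i j \<longleftrightarrow> i < m \<and> j < m \<and> (j + m - i) mod m \<in> D"

lemma circ_sym:
  assumes "D \<subseteq> {1..<m}" "\<forall>d\<in>D. m - d \<in> D" "circ m D i j"
  shows "circ m D j i"
proof -
  have ij: "i < m" "j < m" and d: "(j + m - i) mod m \<in> D" using assms(3) unfolding circ_def by auto
  have md: "m - (j + m - i) mod m \<in> D" using assms(2) d by blast
  have "(i + m - j) mod m = m - (j + m - i) mod m"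
  proof (cases "i \<le> j")
    case True
    have jm: "j - i < m" using ij by linarith
    have q: "j + m - i = (j - i) + m" using True by linarith
    have e0: "((j - i) + m) mod m = j - i" using jm by simp
    have e: "(j + m - i) mod m = j - i" using e0 q by (simp only:)
    have "j - i \<ge> 1" using d e assms(1) by force
    then have r1: "i + m - j = m - (j - i)" and r2: "m - (j - i) < m" using True ij by linarith+
    have "(i + m - j) mod m = (m - (j - i)) mod m" using r1 by (simp only:)
    also have "\<dots> = m - (j - i)" using r2 by (rule mod_less)
    finally show ?thesis using e by (simp only:)
  next
    case False
    have e: "(j + m - i) mod m = j + m - i" using ij False by simp
    have im: "i - j < m" using ij by linarith
    have q: "i + m - j = (i - j) + m" using False by linarith
    have e0: "((i - j) + m) mod m = i - j" using im by simp
    have A: "(i + m - j) mod m = i - j" using e0 q by (simp only:)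
    have B: "i - j = m - (j + m - i)" using False ij by linarith
    show ?thesis using A B e by (simp only:)
  qed
  then show ?thesis using md ij unfolding circ_def by simp
qed

lemma circ_irrefl: "D \<subseteq> {1..<m} \<Longrightarrow> \<not> circ m D i i"
  unfolding circ_def by auto

lemma circ_mono: "D \<subseteq> D' \<Longrightarrow> circ m D i j \<Longrightarrow> circ m D' i j"
  unfolding circ_def by auto

lemma circ_deg:
  assumes "D \<subseteq> {1..<m}" "i < m"
  shows "card {j. j < m \<and> circ m D i j} = card D"
proof -
  have "bij_betw (\<lambda>j. (j + m - i) mod m) {j. j < m \<and> circ m D i j} D"
  proof (rule bij_betw_imageI)
    show "inj_on (\<lambda>j. (j + m - i) mod m) {j. j < m \<and> circ m D i j}"
    proof (rule inj_onI)
      fix a b assume a: "a \<in> {j. j < m \<and> circ m D i j}" and b: "b \<in> {j. j < m \<and> circ m D i j}"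
        and eq: "(a + m - i) mod m = (b + m - i) mod m"
      have am: "a < m" and bm: "b < m" using a b by auto
      show "a = b"
      proof (rule ccontr)
        assume ne: "a \<noteq> b"
        show False
        proof (cases "a \<ge> i"; cases "b \<ge> i")
          assume "a \<ge> i" "b \<ge> i" then show False using eq ne am bm by (simp add: le_mod_geq)
        next
          assume "a \<ge> i" "\<not> b \<ge> i" then show False using eq ne am bm assms(2) by (simp add: le_mod_geq)
        next
          assume "\<not> a \<ge> i" "b \<ge> i" then show False using eq ne am bm assms(2) by (simp add: le_mod_geq)
        next
          assume h: "\<not> a \<ge> i" "\<not> b \<ge> i"
          then have "a + m - i = b + m - i" using eq am bm by simp
          then show False using ne h assms(2) by linarith
        qed
      qed
    qed
    show "(\<lambda>j. (j + m - i) mod m) ` {j. j < m \<and> circ m D i j} = D"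
    proof
      show "(\<lambda>j. (j + m - i) mod m) ` {j. j < m \<and> circ m D i j} \<subseteq> D"
        unfolding circ_def by auto
      show "D \<subseteq> (\<lambda>j. (j + m - i) mod m) ` {j. j < m \<and> circ m D i j}"
      proof
        fix d assume dD: "d \<in> D"
        then have dm: "d < m" using assms(1) by auto
        define j where "j = (d + i) mod m"
        have jm: "j < m" unfolding j_def using dm by simp
        have "(j + m - i) mod m = d"
        proof (cases "d + i < m")
          case True
          then show ?thesis unfolding j_def using dm by simp
        next
          case False
          then have "j = d + i - m" unfolding j_def using dm assms(2)
            by (simp add: le_mod_geq)
          then show ?thesis using False dm assms(2) by simp
        qed
        then show "d \<in> (\<lambda>j. (j + m - i) mod m) ` {j. j < m \<and> circ m D i j}"
          using jm dD assms(2) unfolding circ_def by (intro image_eqI[of _ _ j]) auto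
      qed
    qed
  qed
  then show ?thesis by (rule bij_betw_same_card)
qed


definition Dk :: "nat \<Rightarrow> nat \<Rightarrow> nat set" where
  "Dk m k = {1..k div 2} \<union> {m - k div 2..m - 1} \<union> (if odd k then {m div 2} else {})"

lemma Dk_props:
  assumes "2 \<le> k" "k + 1 \<le> m" "even (m * k)"
  shows "Dk m k \<subseteq> {1..<m}" "\<forall>d\<in>Dk m k. m - d \<in> Dk m k" "card (Dk m k) = k"
    "{1, m - 1} \<subseteq> Dk m k"
proof -
  have oddm: "odd k \<Longrightarrow> even m" using assms(3) by auto
  have a_lt: "k div 2 < m" and a_ge: "1 \<le> k div 2" and a2: "2 * (k div 2) \<le> k" using assms by auto
  show "Dk m k \<subseteq> {1..<m}"
  proof
    fix d assume "d \<in> Dk m k"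
    then have "d \<in> {1..k div 2} \<or> d \<in> {m - k div 2..m - 1} \<or> (odd k \<and> d = m div 2)"
      unfolding Dk_def by (auto split: if_splits)
    then show "d \<in> {1..<m}" using a_lt assms(1,2) by auto
  qed
  show "{1, m - 1} \<subseteq> Dk m k" using a_lt a_ge unfolding Dk_def by auto
  show "\<forall>d\<in>Dk m k. m - d \<in> Dk m k"
  proof
    fix d assume "d \<in> Dk m k"
    then have "d \<in> {1..k div 2} \<or> d \<in> {m - k div 2..m - 1} \<or> (odd k \<and> d = m div 2)"
      unfolding Dk_def by (auto split: if_splits)
    then have "m - d \<in> {1..k div 2} \<or> m - d \<in> {m - k div 2..m - 1} \<or> (odd k \<and> m - d = m div 2)"
    proof (elim disjE)
      assume "d \<in> {1..k div 2}" then have "m - d \<in> {m - k div 2..m - 1}" using a_lt by auto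
      then show ?thesis by blast
    next
      assume "d \<in> {m - k div 2..m - 1}" then have "m - d \<in> {1..k div 2}" using a_lt by auto
      then show ?thesis by blast
    next
      assume h: "odd k \<and> d = m div 2"
      then have "even m" using oddm by blast
      then have "m - d = m div 2" using h by auto
      then show ?thesis using h by blast
    qed
    then show "m - d \<in> Dk m k" unfolding Dk_def by auto
  qed
  have c1: "card {1..k div 2} = k div 2" by simp
  have c2: "card {m - k div 2..m - 1} = k div 2" using assms by simp
  have dj: "{1..k div 2} \<inter> {m - k div 2..m - 1} = {}" using a2 assms(2) by auto
  have c12: "card ({1..k div 2} \<union> {m - k div 2..m - 1}) = 2 * (k div 2)"
    using card_Un_disjoint[OF finite_atLeastAtMost finite_atLeastAtMost dj] c1 c2 by linarith
  show "card (Dk m k) = k"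
  proof (cases "odd k")
    case True
    obtain a where ka: "k = 2 * a + 1" using True oddE by blast
    obtain b where mb: "m = 2 * b" using True oddm by blast
    have "a < b" using ka mb assms(2) by linarith
    then have "m div 2 \<notin> {1..k div 2} \<union> {m - k div 2..m - 1}" using ka mb by simp
    then show ?thesis using True c12 unfolding Dk_def by simp
  next
    case False
    then show ?thesis using c12 unfolding Dk_def by simp
  qed
qed


lemma mid_card:
  assumes "D \<subseteq> {1..<m}" "m = n - 4" "2 \<le> v" "v < n - 2" "4 \<le> n"
  shows "card {u. u < n \<and> 2 \<le> u \<and> u < n - 2 \<and> circ m D (v - 2) (u - 2)} = card D"
proof -
  have "{u. u < n \<and> 2 \<le> u \<and> u < n - 2 \<and> circ m D (v - 2) (u - 2)}
        = (\<lambda>i. i + 2) ` {i. i < m \<and> circ m D (v - 2) i}"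
  proof (rule set_eqI, rule iffI)
    fix u assume "u \<in> {u. u < n \<and> 2 \<le> u \<and> u < n - 2 \<and> circ m D (v - 2) (u - 2)}"
    then have "u - 2 \<in> {i. i < m \<and> circ m D (v - 2) i}" "u = (u - 2) + 2"
      using assms unfolding circ_def by auto
    then show "u \<in> (\<lambda>i. i + 2) ` {i. i < m \<and> circ m D (v - 2) i}" by blast
  next
    fix u assume "u \<in> (\<lambda>i. i + 2) ` {i. i < m \<and> circ m D (v - 2) i}"
    then show "u \<in> {u. u < n \<and> 2 \<le> u \<and> u < n - 2 \<and> circ m D (v - 2) (u - 2)}"
      using assms by auto
  qed
  also have "card \<dots> = card {i. i < m \<and> circ m D (v - 2) i}"
    by (rule card_image) (simp add: inj_on_def)
  also have "\<dots> = card D" using circ_deg[OF assms(1)] assms by simp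
  finally show ?thesis .
qed

definition bigE :: "nat \<Rightarrow> nat \<Rightarrow> nat \<Rightarrow> nat \<Rightarrow> bool" where
  "bigE n x u v \<longleftrightarrow> u < n \<and> v < n \<and> u \<noteq> v \<and> (u < 2 \<or> v < 2 \<or>
     (2 \<le> u \<and> u < n - 2 \<and> 2 \<le> v \<and> v < n - 2 \<and> circ (n - 4) (Dk (n - 4) (x - 2)) (u - 2) (v - 2)))"

definition bigF :: "nat \<Rightarrow> nat \<Rightarrow> nat \<Rightarrow> bool" where
  "bigF n u v \<longleftrightarrow> u < n \<and> v < n \<and> ((u < 2 \<and> n - 2 \<le> v) \<or> (v < 2 \<and> n - 2 \<le> u) \<or>
     (2 \<le> u \<and> u < n - 2 \<and> 2 \<le> v \<and> v < n - 2 \<and> circ (n - 4) {1, n - 5} (u - 2) (v - 2)))"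

lemma existence:
  fixes n x :: nat
  assumes x4: "4 \<le> x" and xn: "x + 3 \<le> n" and ev: "even ((n - 4) * x)"
  shows "realization n (seq_d n x) (bigE n x) \<and> k_factor n 2 (bigE n x) (bigF n)"
proof -
  define m where "m = n - 4"
  define k where "k = x - 2"
  have k2: "2 \<le> k" and km: "k + 1 \<le> m" using x4 xn unfolding m_def k_def by auto
  have xk: "x = k + 2" using x4 unfolding k_def by simp
  have "m * x = m * k + 2 * m" unfolding xk by (simp add: algebra_simps)
  then have evk: "even (m * k)" using ev unfolding m_def[symmetric] by simp
  note DP = Dk_props[OF k2 km evk]
  have D2: "{1, m - 1} \<subseteq> {1..<m}" "\<forall>d\<in>{1, m - 1}. m - d \<in> {1, m - 1}" "card {1, m - 1} = 2"
    using km k2 by auto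
  have m5: "n - 5 = m - 1" unfolding m_def by simp
  have Edef: "\<And>u v. bigE n x u v \<longleftrightarrow> u < n \<and> v < n \<and> u \<noteq> v \<and> (u < 2 \<or> v < 2 \<or>
     (2 \<le> u \<and> u < n - 2 \<and> 2 \<le> v \<and> v < n - 2 \<and> circ m (Dk m k) (u - 2) (v - 2)))"
    unfolding bigE_def m_def k_def by simp
  have Fdef: "\<And>u v. bigF n u v \<longleftrightarrow> u < n \<and> v < n \<and> ((u < 2 \<and> n - 2 \<le> v) \<or> (v < 2 \<and> n - 2 \<le> u) \<or>
     (2 \<le> u \<and> u < n - 2 \<and> 2 \<le> v \<and> v < n - 2 \<and> circ m {1, m - 1} (u - 2) (v - 2)))"
    unfolding bigF_def m5 m_def by simp
  have sgE: "simple_graph n (bigE n x)"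
    unfolding simple_graph_def Edef using circ_sym[OF DP(1) DP(2)] by blast
  have sgF: "simple_graph n (bigF n)"
    unfolding simple_graph_def Fdef using circ_sym[OF D2(1) D2(2)] circ_irrefl[OF D2(1)] x4 xn by auto
  have FE: "\<forall>u v. bigF n u v \<longrightarrow> bigE n x u v"
  proof (intro allI impI)
    fix u v assume h: "bigF n u v"
    show "bigE n x u v"
    proof (cases "2 \<le> u \<and> u < n - 2 \<and> 2 \<le> v \<and> v < n - 2")
      case True
      then have c: "circ m {1, m - 1} (u - 2) (v - 2)" using h unfolding Fdef by auto
      have "u \<noteq> v" using c circ_irrefl[OF D2(1)] by auto
      then show ?thesis using True circ_mono[OF DP(4) c] h unfolding Edef Fdef by auto
    next
      case False then show ?thesis using h x4 xn unfolding Edef Fdef by auto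
    qed
  qed
  have degE: "degree n (bigE n x) v = seq_d n x v" if v: "v < n" for v
  proof -
    consider "v < 2" | "2 \<le> v \<and> v < n - 2" | "n - 2 \<le> v" by linarith
    then show ?thesis
    proof cases
      case 1
      have "{u. u < n \<and> bigE n x v u} = {..<n} - {v}" unfolding Edef using 1 v by auto
      then show ?thesis using 1 v unfolding degree_def seq_d_def by simp
    next
      case 2
      have "{u. u < n \<and> bigE n x v u} = {0, 1} \<union> {u. u < n \<and> 2 \<le> u \<and> u < n - 2 \<and> circ m (Dk m k) (v - 2) (u - 2)}"
        unfolding Edef using 2 v circ_irrefl[OF DP(1)] by auto
      moreover have "card {u. u < n \<and> 2 \<le> u \<and> u < n - 2 \<and> circ m (Dk m k) (v - 2) (u - 2)} = k"
        using mid_card[OF DP(1) m_def] 2 x4 xn DP(3) by simp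
      moreover have "finite {u. u < n \<and> 2 \<le> u \<and> u < n - 2 \<and> circ m (Dk m k) (v - 2) (u - 2)}" by simp
      moreover have "{0::nat, 1} \<inter> {u. u < n \<and> 2 \<le> u \<and> u < n - 2 \<and> circ m (Dk m k) (v - 2) (u - 2)} = {}"
        by auto
      ultimately have "card {u. u < n \<and> bigE n x v u} = 2 + k"
        using card_Un_disjoint[of "{0::nat, 1}" "{u. u < n \<and> 2 \<le> u \<and> u < n - 2 \<and> circ m (Dk m k) (v - 2) (u - 2)}"]
        by simp
      then show ?thesis using 2 x4 unfolding degree_def seq_d_def k_def by simp
    next
      case 3
      have "{u. u < n \<and> bigE n x v u} = {0, 1}" unfolding Edef using 3 v x4 xn by auto
      then show ?thesis using 3 v x4 xn unfolding degree_def seq_d_def by simp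
    qed
  qed
  have degF: "degree n (bigF n) v = 2" if v: "v < n" for v
  proof -
    consider "v < 2" | "2 \<le> v \<and> v < n - 2" | "n - 2 \<le> v" by linarith
    then show ?thesis
    proof cases
      case 1
      have "{u. u < n \<and> bigF n v u} = {n - 2, n - 1}" unfolding Fdef using 1 v x4 xn by auto
      then show ?thesis using xn unfolding degree_def by simp
    next
      case 2
      have "{u. u < n \<and> bigF n v u} = {u. u < n \<and> 2 \<le> u \<and> u < n - 2 \<and> circ m {1, m - 1} (v - 2) (u - 2)}"
        unfolding Fdef using 2 v by auto
      then show ?thesis using mid_card[OF D2(1) m_def] 2 x4 xn D2(3) unfolding degree_def by simp
    next
      case 3
      have "{u. u < n \<and> bigF n v u} = {0, 1}" unfolding Fdef using 3 v x4 xn by auto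
      then show ?thesis unfolding degree_def by simp
    qed
  qed
  show ?thesis unfolding realization_def k_factor_def using sgE sgF FE degE degF by blast
qed


lemma nonexist:
  fixes n x :: nat
  assumes x4: "4 \<le> x" and xn: "x + 3 \<le> n"
    and R: "realization n (seq_d n x) E" and KF: "k_factor n 2 E F" and C: "connected_graph n F"
  shows False
proof -
  have sg: "simple_graph n E" and deg: "\<And>v. v < n \<Longrightarrow> card {u. u < n \<and> E v u} = seq_d n x v"
    using R unfolding realization_def degree_def by auto
  have Eb: "\<And>u v. E u v \<Longrightarrow> u < n \<and> v < n" and Es: "\<And>u v. E u v \<Longrightarrow> E v u"
    and Ei: "\<And>v. \<not> E v v" using sg unfolding simple_graph_def by auto
  have sgF: "simple_graph n F" and FE: "\<And>u v. F u v \<Longrightarrow> E u v"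
    and degF: "\<And>v. v < n \<Longrightarrow> card {u. u < n \<and> F v u} = 2"
    using KF unfolding k_factor_def degree_def by auto
  have Fs: "\<And>u v. F u v \<Longrightarrow> F v u" using sgF unfolding simple_graph_def by auto
  have n7: "7 \<le> n" using x4 xn by simp
  have hub: "E h v" if h: "h < 2" and v: "v < n" "v \<noteq> h" for h v
  proof -
    have "{u. u < n \<and> E h u} = {..<n} - {h}"
    proof (rule card_seteq)
      show "finite ({..<n} - {h})" by simp
      show "{u. u < n \<and> E h u} \<subseteq> {..<n} - {h}" using Ei by auto
      have "card ({..<n} - {h}) = n - 1" using h n7 by simp
      also have "\<dots> = card {u. u < n \<and> E h u}" using deg[of h] h n7 unfolding seq_d_def by simp
      finally show "card ({..<n} - {h}) \<le> card {u. u < n \<and> E h u}" by simp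
    qed
    then show ?thesis using v by auto
  qed
  have leafE: "{u. u < n \<and> E w u} = {0, 1}" if w: "n - 2 \<le> w" "w < n" for w
  proof (rule sym, rule card_seteq)
    show "finite {u. u < n \<and> E w u}" by simp
    show "{0, 1} \<subseteq> {u. u < n \<and> E w u}" using hub[of 0 w] hub[of 1 w] Es w n7 by auto
    have "card {u. u < n \<and> E w u} = 2" using deg[of w] w n7 unfolding seq_d_def by simp
    then show "card {u. u < n \<and> E w u} \<le> card {0::nat, 1}" by simp
  qed
  have leafF: "{u. u < n \<and> F w u} = {0, 1}" if w: "n - 2 \<le> w" "w < n" for w
  proof (rule card_seteq)
    show "finite {0::nat, 1}" by simp
    show "{u. u < n \<and> F w u} \<subseteq> {0, 1}" using leafE[OF w] FE by blast
    show "card {0::nat, 1} \<le> card {u. u < n \<and> F w u}" using degF[of w] w by simp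
  qed
  have hubF: "{u. u < n \<and> F h u} = {n - 2, n - 1}" if h: "h < 2" for h
  proof (rule sym, rule card_seteq)
    show "finite {u. u < n \<and> F h u}" by simp
    have h01: "h \<in> {0, 1}" using h by auto
    have l1: "{u. u < n \<and> F (n - 2) u} = {0, 1}" using leafF[of "n - 2"] n7 by simp
    have l2: "{u. u < n \<and> F (n - 1) u} = {0, 1}" using leafF[of "n - 1"] n7 by simp
    have "h \<in> {u. u < n \<and> F (n - 2) u}" "h \<in> {u. u < n \<and> F (n - 1) u}"
      using h01 unfolding l1 l2 by blast+
    then have "F (n - 2) h" "F (n - 1) h" by blast+
    then show "{n - 2, n - 1} \<subseteq> {u. u < n \<and> F h u}" using Fs n7 by auto
    have "card {n - 2, n - 1} = 2" using n7 by simp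
    then show "card {u. u < n \<and> F h u} \<le> card {n - 2, n - 1}" using degF[of h] h n7 by simp
  qed
  have Fb: "\<And>u v. F u v \<Longrightarrow> u < n \<and> v < n" using sgF unfolding simple_graph_def by auto
  define S where "S = {0::nat, 1, n - 2, n - 1}"
  have closed: "v \<in> S" if "u \<in> S" "F u v" for u v
  proof -
    have vn: "v < n" using Fb that(2) by auto
    show ?thesis
    proof (cases "u < 2")
      case True
      have "v \<in> {w. w < n \<and> F u w}" using vn that(2) by simp
      then show ?thesis using hubF[OF True] unfolding S_def by auto
    next
      case False
      then have "n - 2 \<le> u" "u < n" using that(1) n7 unfolding S_def by auto
      moreover have "v \<in> {w. w < n \<and> F u w}" using vn that(2) by simp
      ultimately show ?thesis using leafF unfolding S_def by auto
    qed
  qed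
  have "F\<^sup>*\<^sup>* 0 2" using C n7 unfolding connected_graph_def by auto
  then have "2 \<in> S"
  proof (induction rule: rtranclp_induct)
    case base then show ?case unfolding S_def by simp
  next
    case (step y z) then show ?case using closed by blast
  qed
  then show False using n7 unfolding S_def by auto
qed


theorem mainTheorem1:
  fixes n x :: nat
  assumes "4 \<le> x" and "x + 3 \<le> n" and "even ((n - 4) * x)"
  shows "graphic n (seq_d n x) \<and> k_factorable n 2 (seq_d n x) \<and>
         (\<forall>E. realization n (seq_d n x) E \<longrightarrow>
              \<not> (\<exists>F. k_factor n 2 E F \<and> connected_graph n F))"
proof -
  have ex: "realization n (seq_d n x) (bigE n x) \<and> k_factor n 2 (bigE n x) (bigF n)"
    using existence[OF assms] .
  show ?thesis
    unfolding graphic_def k_factorable_def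
    using ex nonexist[OF assms(1,2)] by blast
qed

end
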